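(* Let $\Bbbk$ be a field of characteristic zero, let $n \geq 5$ be odd and $S=\Bbbk[x_1,\ldots,x_n]$. If $I\subset S$ is an artinian ideal minimally generated by $n+2$ quadratic monomials, then $S/I$ has the WLP.
   Context: A standard graded artinian algebra $A=\bigoplus_i A_i$ has the WLP if there is a linear form $\ell$ such that $\times\ell:A_k\to A_{k+1}$ has maximal rank (is injective or surjective) for every $k$; for monomial quotients $S/I$ this is equivalent to taking $\ell=x_1+\cdots+x_n$. *)

theory Defs
  imports Main
begin

text \<open>Monomials in S = k[x_0,...,x_(n-1)] are exponent vectors a :: nat => nat
  with a i = 0 for i >= n.  A monomial ideal is given by a finite set G of
  monomial generators.  The quotient A = S/I has as k-basis the monomials not in I
  (standard monomials); an element of A_d is a coefficient function on the
  standard monomials of degree d.\<close>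

type_synonym monomial = "nat \<Rightarrow> nat"

definition is_mon :: "nat \<Rightarrow> monomial \<Rightarrow> bool" where
  "is_mon n a \<longleftrightarrow> (\<forall>i\<ge>n. a i = 0)"

definition mon_deg :: "nat \<Rightarrow> monomial \<Rightarrow> nat" where
  "mon_deg n a = (\<Sum>i<n. a i)"

definition mon_dvd :: "monomial \<Rightarrow> monomial \<Rightarrow> bool" where
  "mon_dvd a b \<longleftrightarrow> (\<forall>i. a i \<le> b i)"

definition in_mon_ideal :: "monomial set \<Rightarrow> monomial \<Rightarrow> bool" where
  "in_mon_ideal G a \<longleftrightarrow> (\<exists>g\<in>G. mon_dvd g a)"

definition artinian_mon :: "nat \<Rightarrow> monomial set \<Rightarrow> bool" where
  "artinian_mon n G \<longleftrightarrow> (\<forall>i<n. \<exists>k. in_mon_ideal G ((\<lambda>_. 0)(i := k)))"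

definition std :: "nat \<Rightarrow> monomial set \<Rightarrow> nat \<Rightarrow> monomial set" where
  "std n G d = {a. is_mon n a \<and> mon_deg n a = d \<and> \<not> in_mon_ideal G a}"

definition graded_piece :: "nat \<Rightarrow> monomial set \<Rightarrow> nat \<Rightarrow> (monomial \<Rightarrow> 'k::field) set" where
  "graded_piece n G d = {f. \<forall>a. a \<notin> std n G d \<longrightarrow> f a = 0}"

text \<open>Multiplication by the linear form l = sum_i c i * x_i, as a map A_d -> A_(d+1).\<close>
definition mult_lin :: "nat \<Rightarrow> monomial set \<Rightarrow> (nat \<Rightarrow> 'k::field) \<Rightarrow> nat
    \<Rightarrow> (monomial \<Rightarrow> 'k) \<Rightarrow> (monomial \<Rightarrow> 'k)" where
  "mult_lin n G c d f = (\<lambda>b. if b \<in> std n G (Suc d) then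
      (\<Sum>i<n. if 1 \<le> b i \<and> b(i := b i - 1) \<in> std n G d
               then c i * f (b(i := b i - 1)) else 0)
    else 0)"

definition max_rank_at :: "nat \<Rightarrow> monomial set \<Rightarrow> (nat \<Rightarrow> 'k::field) \<Rightarrow> nat \<Rightarrow> bool" where
  "max_rank_at n G c d \<longleftrightarrow>
     inj_on (mult_lin n G c d) (graded_piece n G d) \<or>
     mult_lin n G c d ` graded_piece n G d = graded_piece n G (Suc d)"

definition has_WLP :: "'k::field itself \<Rightarrow> nat \<Rightarrow> monomial set \<Rightarrow> bool" where
  "has_WLP _ n G \<longleftrightarrow> (\<exists>c :: nat \<Rightarrow> 'k. \<forall>d. max_rank_at n G c d)"

end

theory Submission
  imports Defs
begin

lemma mon_deg_upd:
  assumes "j < n" shows "mon_deg n (a(j:=v)) + a j = mon_deg n a + v"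
proof -
  have "mon_deg n (a(j:=v)) = v + (\<Sum>i\<in>{..<n}-{j}. a i)"
    unfolding mon_deg_def using assms by (simp add: sum.remove)
  moreover have "mon_deg n a = a j + (\<Sum>i\<in>{..<n}-{j}. a i)"
    unfolding mon_deg_def using assms by (simp add: sum.remove)
  ultimately show ?thesis by simp
qed

lemma in_ideal_mono: "in_mon_ideal G b \<Longrightarrow> (\<forall>i. b i \<le> a i) \<Longrightarrow> in_mon_ideal G a"
  unfolding in_mon_ideal_def mon_dvd_def by (meson order_trans)

lemma std_lt: "a \<in> std n G d \<Longrightarrow> a j \<noteq> 0 \<Longrightarrow> j < n"
  unfolding std_def is_mon_def by (metis (mono_tags, lifting) mem_Collect_eq not_le)

lemma std_down:
  assumes "a \<in> std n G (Suc d)" "a j = 1" shows "a(j:=0) \<in> std n G d"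
proof -
  have j: "j < n" using assms std_lt by force
  have "mon_deg n (a(j:=0)) = d" using mon_deg_upd[OF j, of a 0] assms unfolding std_def by simp
  moreover have "is_mon n (a(j:=0))" using assms unfolding std_def is_mon_def by auto
  moreover have "\<not> in_mon_ideal G (a(j:=0))"
  proof
    assume "in_mon_ideal G (a(j:=0))"
    moreover have "\<forall>i. (a(j:=0)) i \<le> a i" by simp
    ultimately have "in_mon_ideal G a" by (rule in_ideal_mono)
    then show False using assms unfolding std_def by simp
  qed
  ultimately show ?thesis unfolding std_def by simp
qed

lemma std_up_deg:
  assumes "a \<in> std n G d" "a i = 0" "i < n" "a(i:=1) \<in> std n G e" shows "e = Suc d"
  using mon_deg_upd[OF assms(3), of a 1] assms unfolding std_def by simp

locale wsetup =
  fixes n :: nat and G :: "monomial set" and Z :: "nat set"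
  assumes zo: "a \<in> std n G d \<Longrightarrow> a i \<le> 1"
  and exch: "\<lbrakk>a \<in> std n G d; a i = 0; a j = 1; i \<noteq> j; i \<notin> Z; j \<notin> Z; i < n;
      (a(j:=0))(i:=1) \<in> std n G d\<rbrakk> \<Longrightarrow> a(i:=1) \<in> std n G (Suc d)"
begin

lemma std_fin: "finite (std n G d)"
proof -
  have "std n G d \<subseteq> {f. \<forall>x. (x \<in> {..<n} \<longrightarrow> f x \<in> {0,1}) \<and> (x \<notin> {..<n} \<longrightarrow> f x = 0)}"
    using zo unfolding std_def is_mon_def by (force simp: le_Suc_eq)
  moreover have "finite {f::monomial. \<forall>x. (x \<in> {..<n} \<longrightarrow> f x \<in> {0,1}) \<and> (x \<notin> {..<n} \<longrightarrow> f x = 0)}"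
    by (rule finite_set_of_finite_funs) auto
  ultimately show ?thesis by (rule finite_subset)
qed

lemma zo': "a \<in> std n G d \<Longrightarrow> a i \<noteq> 0 \<Longrightarrow> a i = 1"
  using zo[of a d i] by simp

definition NN :: "monomial \<Rightarrow> nat" where
  "NN a = card {i. i < n \<and> i \<notin> Z \<and> a i = 0 \<and> a(i:=1) \<in> std n G (Suc (mon_deg n a))}"
definition MM :: "monomial \<Rightarrow> nat" where
  "MM a = card {i. i < n \<and> i \<notin> Z \<and> a i = 1}"
definition kap :: "monomial \<Rightarrow> int" where
  "kap a = int (NN a) - int (MM a)"

lemma kshift:
  assumes b: "b \<in> std n G (Suc d)" and bj: "b j = 1" and jZ: "j \<notin> Z"
  shows "kap (b(j:=0)) = kap b + 2"
proof -
  have j: "j < n" using std_lt[OF b] bj by simp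
  have db: "mon_deg n b = Suc d" using b unfolding std_def by simp
  have bj0: "b(j:=0) \<in> std n G d" using std_down[OF b bj] .
  have dbj: "mon_deg n (b(j:=0)) = d" using bj0 unfolding std_def by simp
  have s1: "{i. i < n \<and> i \<notin> Z \<and> (b(j:=0)) i = 0 \<and> (b(j:=0))(i:=1) \<in> std n G (Suc (mon_deg n (b(j:=0))))}
     = insert j {i. i < n \<and> i \<notin> Z \<and> b i = 0 \<and> b(i:=1) \<in> std n G (Suc (mon_deg n b))}"
  proof (rule set_eqI, rule iffI)
    fix i assume "i \<in> {i. i < n \<and> i \<notin> Z \<and> (b(j:=0)) i = 0 \<and> (b(j:=0))(i:=1) \<in> std n G (Suc (mon_deg n (b(j:=0))))}"
    then have i: "i < n" "i \<notin> Z" "(b(j:=0)) i = 0" "(b(j:=0))(i:=1) \<in> std n G (Suc d)" by (auto simp: dbj)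
    show "i \<in> insert j {i. i < n \<and> i \<notin> Z \<and> b i = 0 \<and> b(i:=1) \<in> std n G (Suc (mon_deg n b))}"
    proof (cases "i = j")
      case False
      then have "b i = 0" using i by simp
      moreover have "b(i:=1) \<in> std n G (Suc (Suc d))"
        using exch[OF b \<open>b i = 0\<close> bj False i(2) jZ i(1)] i(4) False by (simp add: fun_upd_twist)
      ultimately show ?thesis using i db by simp
    qed simp
  next
    fix i assume "i \<in> insert j {i. i < n \<and> i \<notin> Z \<and> b i = 0 \<and> b(i:=1) \<in> std n G (Suc (mon_deg n b))}"
    then consider "i = j" | "i < n" "i \<notin> Z" "b i = 0" "b(i:=1) \<in> std n G (Suc (Suc d))" "i \<noteq> j"
      using db bj by auto
    then show "i \<in> {i. i < n \<and> i \<notin> Z \<and> (b(j:=0)) i = 0 \<and> (b(j:=0))(i:=1) \<in> std n G (Suc (mon_deg n (b(j:=0))))}"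
    proof cases
      case 1 then show ?thesis using j jZ b bj dbj by (simp add: fun_upd_idem)
    next
      case 2
      have "(b(i:=1))(j:=0) \<in> std n G (Suc d)" using std_down[OF 2(4)] 2 bj by simp
      then show ?thesis using 2 dbj by (simp add: fun_upd_twist)
    qed
  qed
  have s2: "{i. i < n \<and> i \<notin> Z \<and> (b(j:=0)) i = 1} = {i. i < n \<and> i \<notin> Z \<and> b i = 1} - {j}"
    by auto
  have NN: "NN (b(j:=0)) = Suc (NN b)"
    unfolding NN_def s1 using bj by (subst card_insert_disjoint) auto
  have MM: "MM (b(j:=0)) + 1 = MM b"
    unfolding MM_def s2 using j jZ bj
    by (subst card_Diff_singleton) (auto simp: Suc_le_eq card_gt_0_iff intro!: Suc_pred)
  show ?thesis unfolding kap_def using NN MM by simp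
qed


lemma sum_split_at:
  fixes F :: "nat \<Rightarrow> 'a::comm_monoid_add"
  assumes "i < n" shows "sum F {..<n} = F i + sum (\<lambda>j. if j = i then 0 else F j) {..<n}"
proof -
  have "sum F {..<n} = F i + sum F ({..<n} - {i})" using assms by (simp add: sum.remove)
  also have "sum F ({..<n} - {i}) = sum (\<lambda>j. if j = i then 0 else F j) ({..<n} - {i})"
    by (rule sum.cong) auto
  also have "\<dots> = sum (\<lambda>j. if j = i then 0 else F j) {..<n}"
    using assms by (subst (2) sum.remove[of _ i]) auto
  finally show ?thesis .
qed

lemma card_sum_if:
  assumes "finite A" shows "(of_nat (card {i\<in>A. P i}) :: 'a::semiring_1) = (\<Sum>i\<in>A. if P i then 1 else 0)"
proof -
  have "(\<Sum>i\<in>A. if P i then (1::'a) else 0) = sum (\<lambda>_. 1) (A \<inter> {i. P i})"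
    using assms by (simp add: sum.If_cases)
  also have "\<dots> = of_nat (card (A \<inter> {i. P i}))" by simp
  also have "A \<inter> {i. P i} = {i\<in>A. P i}" by auto
  finally show ?thesis by simp
qed

definition cc :: "nat \<Rightarrow> 'k::field" where "cc i = (if i \<in> Z then 0 else 1)"

definition up :: "nat \<Rightarrow> (monomial \<Rightarrow> 'k::field) \<Rightarrow> (monomial \<Rightarrow> 'k)" where
  "up d f = mult_lin n G cc d f"

definition lo :: "nat \<Rightarrow> (monomial \<Rightarrow> 'k::field) \<Rightarrow> (monomial \<Rightarrow> 'k)" where
  "lo e g = (\<lambda>a. if 0 < e \<and> a \<in> std n G (e - 1) then
     (\<Sum>i<n. if a i = 0 \<and> a(i:=1) \<in> std n G e then cc i * g (a(i:=1)) else 0) else 0)"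

lemma std0: "a \<in> std n G 0 \<Longrightarrow> a j = 0"
proof -
  assume a: "a \<in> std n G 0"
  show "a j = 0"
  proof (cases "j < n")
    case True
    have "(\<Sum>i<n. a i) = 0" using a unfolding std_def mon_deg_def by simp
    then show ?thesis using True by simp
  next
    case False then show ?thesis using a unfolding std_def is_mon_def by simp
  qed
qed

lemma inner1:
  fixes f :: "monomial \<Rightarrow> 'k::field"
  assumes a: "a \<in> std n G d" and ai: "a i = 0" and i: "i < n" and b: "a(i:=1) \<in> std n G (Suc d)"
  shows "up d f (a(i:=1)) = cc i * f a +
     (\<Sum>j<n. if j \<noteq> i \<and> a j = 1 then cc j * f ((a(i:=1))(j:=0)) else 0)"
proof -
  let ?b = "a(i:=1)"
  have "up d f ?b = (\<Sum>j<n. if 1 \<le> ?b j \<and> ?b(j := ?b j - 1) \<in> std n G d then cc j * f (?b(j := ?b j - 1)) else 0)"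
    unfolding up_def mult_lin_def using b by simp
  also have "\<dots> = cc i * f a + (\<Sum>j<n. if j = i then 0 else
       (if 1 \<le> ?b j \<and> ?b(j := ?b j - 1) \<in> std n G d then cc j * f (?b(j := ?b j - 1)) else 0))"
  proof (subst sum_split_at[OF i], rule arg_cong2[where f="(+)"])
    have "?b(i := ?b i - 1) = a" using ai by (simp add: fun_upd_idem)
    then show "(if 1 \<le> ?b i \<and> ?b(i := ?b i - 1) \<in> std n G d then cc i * f (?b(i := ?b i - 1)) else 0) = cc i * f a"
      using a by simp
  qed simp
  also have "(\<Sum>j<n. if j = i then 0 else
       (if 1 \<le> ?b j \<and> ?b(j := ?b j - 1) \<in> std n G d then cc j * f (?b(j := ?b j - 1)) else 0))
     = (\<Sum>j<n. if j \<noteq> i \<and> a j = 1 then cc j * f ((a(i:=1))(j:=0)) else 0)"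
  proof (rule sum.cong[OF refl])
    fix j assume "j \<in> {..<n}"
    show "(if j = i then 0 else
       (if 1 \<le> ?b j \<and> ?b(j := ?b j - 1) \<in> std n G d then cc j * f (?b(j := ?b j - 1)) else 0))
       = (if j \<noteq> i \<and> a j = 1 then cc j * f ((a(i:=1))(j:=0)) else 0)"
    proof (cases "j = i")
      case False
      show ?thesis
      proof (cases "a j = 1")
        case True
        have "?b(j:=0) \<in> std n G d" using std_down[OF b] True False by simp
        then show ?thesis using True False by simp
      next
        case F2: False
        then have "a j = 0" using zo'[OF a, of j] by auto
        then show ?thesis using False by simp
      qed
    qed simp
  qed
  finally show ?thesis .
qed

lemma inner2:
  fixes f :: "monomial \<Rightarrow> 'k::field"
  assumes a: "a \<in> std n G (Suc d)" and aj: "a j = 1"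
  shows "lo (Suc d) f (a(j:=0)) = cc j * f a +
     (\<Sum>i<n. if i \<noteq> j \<and> a i = 0 \<and> (a(j:=0))(i:=1) \<in> std n G (Suc d) then cc i * f ((a(j:=0))(i:=1)) else 0)"
proof -
  let ?b = "a(j:=0)"
  have j: "j < n" using std_lt[OF a] aj by simp
  have b: "?b \<in> std n G d" using std_down[OF a aj] .
  have "lo (Suc d) f ?b = (\<Sum>i<n. if ?b i = 0 \<and> ?b(i:=1) \<in> std n G (Suc d) then cc i * f (?b(i:=1)) else 0)"
    unfolding lo_def using b by simp
  also have "\<dots> = cc j * f a + (\<Sum>i<n. if i = j then 0 else
      (if ?b i = 0 \<and> ?b(i:=1) \<in> std n G (Suc d) then cc i * f (?b(i:=1)) else 0))"
  proof (subst sum_split_at[OF j], rule arg_cong2[where f="(+)"])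
    have "?b(j := 1) = a" using aj by (simp add: fun_upd_idem)
    then show "(if ?b j = 0 \<and> ?b(j:=1) \<in> std n G (Suc d) then cc j * f (?b(j:=1)) else 0) = cc j * f a"
      using a by simp
  qed simp
  also have "(\<Sum>i<n. if i = j then 0 else
      (if ?b i = 0 \<and> ?b(i:=1) \<in> std n G (Suc d) then cc i * f (?b(i:=1)) else 0))
     = (\<Sum>i<n. if i \<noteq> j \<and> a i = 0 \<and> (a(j:=0))(i:=1) \<in> std n G (Suc d) then cc i * f ((a(j:=0))(i:=1)) else 0)"
    by (rule sum.cong) auto
  finally show ?thesis .
qed


lemma cc_sq: "cc i * cc i = (cc i :: 'k::field)" unfolding cc_def by simp

lemma up_zero: "up d (\<lambda>_. 0 :: 'k::field) = (\<lambda>_. 0)"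
  unfolding up_def mult_lin_def by (rule ext) (simp add: sum.neutral)

lemma lo_zero: "lo d (\<lambda>_. 0 :: 'k::field) = (\<lambda>_. 0)"
  unfolding lo_def by (rule ext) (simp add: sum.neutral)

lemma X_NN:
  assumes a: "a \<in> std n G d"
  shows "(\<Sum>i<n. if a i = 0 \<and> a(i:=1) \<in> std n G (Suc d) then cc i * cc i else 0) = (of_nat (NN a) :: 'k::field)"
proof -
  have md: "mon_deg n a = d" using a unfolding std_def by simp
  have "(\<Sum>i<n. if a i = 0 \<and> a(i:=1) \<in> std n G (Suc d) then cc i * cc i else (0::'k))
     = (\<Sum>i<n. if i \<notin> Z \<and> a i = 0 \<and> a(i:=1) \<in> std n G (Suc d) then 1 else 0)"
    by (rule sum.cong) (auto simp: cc_def)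
  also have "\<dots> = of_nat (card {i\<in>{..<n}. i \<notin> Z \<and> a i = 0 \<and> a(i:=1) \<in> std n G (Suc d)})"
    by (rule card_sum_if[symmetric]) simp
  also have "{i\<in>{..<n}. i \<notin> Z \<and> a i = 0 \<and> a(i:=1) \<in> std n G (Suc d)} =
     {i. i < n \<and> i \<notin> Z \<and> a i = 0 \<and> a(i:=1) \<in> std n G (Suc (mon_deg n a))}" using md by auto
  finally show ?thesis unfolding NN_def .
qed

lemma X_MM:
  shows "(\<Sum>i<n. if a i = 1 then cc i * cc i else 0) = (of_nat (MM a) :: 'k::field)"
proof -
  have "(\<Sum>i<n. if a i = 1 then cc i * cc i else (0::'k))
     = (\<Sum>i<n. if i \<notin> Z \<and> a i = 1 then 1 else 0)"
    by (rule sum.cong) (auto simp: cc_def)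
  also have "\<dots> = of_nat (card {i\<in>{..<n}. i \<notin> Z \<and> a i = 1})"
    by (rule card_sum_if[symmetric]) simp
  also have "{i\<in>{..<n}. i \<notin> Z \<and> a i = 1} = {i. i < n \<and> i \<notin> Z \<and> a i = 1}" by auto
  finally show ?thesis unfolding MM_def .
qed

lemma comm:
  fixes f :: "monomial \<Rightarrow> 'k::field"
  assumes f: "f \<in> graded_piece n G d"
  shows "lo (Suc d) (up d f) a - up (d - 1) (lo d f) a = of_int (kap a) * f a"
proof (cases "a \<in> std n G d")
  case False
  have 1: "lo (Suc d) (up d f) a = 0" unfolding lo_def using False by simp
  have 2: "up (d - 1) (lo d f) a = 0"
  proof (cases d)
    case 0 then show ?thesis by (simp add: lo_def up_zero[unfolded fun_eq_iff, simplified])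
  next
    case (Suc d') then show ?thesis unfolding up_def mult_lin_def using False by simp
  qed
  have 3: "f a = 0" using f False unfolding graded_piece_def by simp
  show ?thesis using 1 2 3 by simp
next
  case a: True
  define T where "T i j = (if i \<noteq> j \<and> a i = 0 \<and> a j = 1 \<and> a(i:=1) \<in> std n G (Suc d)
     then cc i * cc j * f ((a(i:=1))(j:=0)) else (0::'k))" for i j
  have L1: "lo (Suc d) (up d f) a = of_nat (NN a) * f a + (\<Sum>i<n. \<Sum>j<n. T i j)"
  proof -
    have "lo (Suc d) (up d f) a = (\<Sum>i<n. if a i = 0 \<and> a(i:=1) \<in> std n G (Suc d) then cc i * up d f (a(i:=1)) else 0)"
      unfolding lo_def using a by simp
    also have "\<dots> = (\<Sum>i<n. (if a i = 0 \<and> a(i:=1) \<in> std n G (Suc d) then cc i * cc i else 0) * f a + (\<Sum>j<n. T i j))"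
    proof (rule sum.cong[OF refl])
      fix i assume i: "i \<in> {..<n}"
      show "(if a i = 0 \<and> a(i:=1) \<in> std n G (Suc d) then cc i * up d f (a(i:=1)) else 0) =
         (if a i = 0 \<and> a(i:=1) \<in> std n G (Suc d) then cc i * cc i else 0) * f a + (\<Sum>j<n. T i j)"
      proof (cases "a i = 0 \<and> a(i:=1) \<in> std n G (Suc d)")
        case True
        have "cc i * up d f (a(i:=1)) = cc i * cc i * f a +
          cc i * (\<Sum>j<n. if j \<noteq> i \<and> a j = 1 then cc j * f ((a(i:=1))(j:=0)) else 0)"
          using inner1[OF a _ _ , of i f] True i by (simp only: distrib_left mult.assoc lessThan_iff simp_thms)
        also have "cc i * (\<Sum>j<n. if j \<noteq> i \<and> a j = 1 then cc j * f ((a(i:=1))(j:=0)) else 0) = (\<Sum>j<n. T i j)"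
          unfolding sum_distrib_left T_def by (rule sum.cong) (use True in auto)
        finally show ?thesis using True by (simp only: True if_True simp_thms mult_1_right)
      next
        case False then show ?thesis unfolding T_def by auto
      qed
    qed
    also have "\<dots> = (\<Sum>i<n. if a i = 0 \<and> a(i:=1) \<in> std n G (Suc d) then cc i * cc i else 0) * f a + (\<Sum>i<n. \<Sum>j<n. T i j)"
      by (simp add: sum.distrib sum_distrib_right)
    finally show ?thesis by (simp only: X_NN[OF a])
  qed
  show ?thesis
  proof (cases d)
    case 0
    have az: "a j = 0" for j using std0 a 0 by simp
    have 2: "up (d - 1) (lo d f) a = 0" using 0 by (simp add: lo_def up_zero[unfolded fun_eq_iff, simplified])
    have T0: "T i j = 0" for i j unfolding T_def using az by simp
    have "MM a = 0" unfolding MM_def using az by simp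
    then show ?thesis using L1 2 T0 unfolding kap_def by simp
  next
    case (Suc d')
    define T' where "T' j i = (if i \<noteq> j \<and> a j = 1 \<and> a i = 0 \<and> (a(j:=0))(i:=1) \<in> std n G (Suc d')
       then cc j * cc i * f ((a(j:=0))(i:=1)) else (0::'k))" for i j
    have aS: "a \<in> std n G (Suc d')" using a Suc by simp
    have L2: "up (d - 1) (lo d f) a = of_nat (MM a) * f a + (\<Sum>j<n. \<Sum>i<n. T' j i)"
    proof -
      have "up (d - 1) (lo d f) a = (\<Sum>j<n. if 1 \<le> a j \<and> a(j := a j - 1) \<in> std n G d' then cc j * lo (Suc d') f (a(j := a j - 1)) else 0)"
        using aS unfolding up_def mult_lin_def \<open>d = Suc d'\<close> by simp
      also have "\<dots> = (\<Sum>j<n. (if a j = 1 then cc j * cc j else 0) * f a + (\<Sum>i<n. T' j i))"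
      proof (rule sum.cong[OF refl])
        fix j assume j: "j \<in> {..<n}"
        show "(if 1 \<le> a j \<and> a(j := a j - 1) \<in> std n G d' then cc j * lo (Suc d') f (a(j := a j - 1)) else 0) =
          (if a j = 1 then cc j * cc j else 0) * f a + (\<Sum>i<n. T' j i)"
        proof (cases "a j = 1")
          case True
          have bj: "a(j:=0) \<in> std n G d'" using std_down[OF aS True] .
          have "cc j * lo (Suc d') f (a(j:=0)) = cc j * cc j * f a +
            cc j * (\<Sum>i<n. if i \<noteq> j \<and> a i = 0 \<and> (a(j:=0))(i:=1) \<in> std n G (Suc d') then cc i * f ((a(j:=0))(i:=1)) else 0)"
            using inner2[OF aS True, of f] by (simp only: distrib_left mult.assoc)
          also have "cc j * (\<Sum>i<n. if i \<noteq> j \<and> a i = 0 \<and> (a(j:=0))(i:=1) \<in> std n G (Suc d') then cc i * f ((a(j:=0))(i:=1)) else 0)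
             = (\<Sum>i<n. T' j i)"
            unfolding sum_distrib_left T'_def by (rule sum.cong) (use True in auto)
          finally have e: "cc j * lo (Suc d') f (a(j:=0)) = cc j * cc j * f a + (\<Sum>i<n. T' j i)" .
          have "a(j := a j - 1) = a(j:=0)" using True by simp
          then show ?thesis using True bj e by (simp del: fun_upd_apply)
        next
          case False
          then have "a j = 0" using zo'[OF a, of j] by auto
          then show ?thesis unfolding T'_def by simp
        qed
      qed
      also have "\<dots> = (\<Sum>j<n. if a j = 1 then cc j * cc j else 0) * f a + (\<Sum>j<n. \<Sum>i<n. T' j i)"
        by (simp add: sum.distrib sum_distrib_right)
      finally show ?thesis by (simp only: X_MM)
    qed
    have TT: "T i j = T' j i" if i: "i < n" and j: "j < n" for i j
    proof (cases "i \<noteq> j \<and> a i = 0 \<and> a j = 1 \<and> i \<notin> Z \<and> j \<notin> Z")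
      case True
      have eq: "(a(i:=1))(j:=0) = (a(j:=0))(i:=1)" using True by (simp add: fun_upd_twist)
      have "a(i:=1) \<in> std n G (Suc d) \<longleftrightarrow> (a(j:=0))(i:=1) \<in> std n G (Suc d')"
      proof
        assume "a(i:=1) \<in> std n G (Suc d)"
        from std_down[OF this, of j] True eq show "(a(j:=0))(i:=1) \<in> std n G (Suc d')" using Suc by simp
      next
        assume "(a(j:=0))(i:=1) \<in> std n G (Suc d')"
        then show "a(i:=1) \<in> std n G (Suc d)"
          using exch[OF a, of i j] True i Suc by simp
      qed
      then show ?thesis unfolding T_def T'_def using eq True by (simp add: mult.commute)
    next
      case False
      then show ?thesis unfolding T_def T'_def cc_def by auto
    qed
    have "(\<Sum>i<n. \<Sum>j<n. T i j) = (\<Sum>i<n. \<Sum>j<n. T' j i)"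
      by (rule sum.cong[OF refl], rule sum.cong[OF refl]) (simp add: TT)
    also have "\<dots> = (\<Sum>j<n. \<Sum>i<n. T' j i)" by (rule sum.swap)
    finally show ?thesis using L1 L2 unfolding kap_def by (simp add: left_diff_distrib)
  qed
qed


lemma up_add: "up d (\<lambda>x. f x + g x) = (\<lambda>x. up d f x + up d g x)"
  unfolding up_def mult_lin_def
  by (rule ext) (auto simp: sum.distrib[symmetric] algebra_simps intro!: sum.cong)

lemma up_scale: "up d (\<lambda>x. r * f x) = (\<lambda>x. r * up d f x)"
  unfolding up_def mult_lin_def
  by (rule ext) (auto simp: sum_distrib_left algebra_simps intro!: sum.cong)

lemma if_diff0: "(if C then (a::'a::ab_group_add) - b else 0) = (if C then a else 0) - (if C then b else 0)"
  by simp

lemma up_diff: "up d (\<lambda>x. f x - g x) = (\<lambda>x. up d f x - up d g x)"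
  unfolding up_def
proof (rule ext)
  fix b
  show "mult_lin n G cc d (\<lambda>x. f x - g x) b = mult_lin n G cc d f b - mult_lin n G cc d g b"
    unfolding mult_lin_def
    apply (simp add: sum_subtractf[symmetric] if_diff0[symmetric])
    apply (intro impI sum.cong refl)
    apply (simp add: right_diff_distrib)
    done
qed

lemma lo_add: "lo d (\<lambda>x. f x + g x) = (\<lambda>x. lo d f x + lo d g x)"
  unfolding lo_def
  by (rule ext) (auto simp: sum.distrib[symmetric] algebra_simps intro!: sum.cong)

lemma lo_scale: "lo d (\<lambda>x. r * f x) = (\<lambda>x. r * lo d f x)"
  unfolding lo_def
  by (rule ext) (auto simp: sum_distrib_left algebra_simps intro!: sum.cong)

definition supp_in :: "(monomial \<Rightarrow> 'k::field) \<Rightarrow> monomial set \<Rightarrow> bool" where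
  "supp_in f X \<longleftrightarrow> (\<forall>x. x \<notin> X \<longrightarrow> f x = 0)"

definition KK :: "nat \<Rightarrow> int \<Rightarrow> monomial set" where
  "KK d v = {a \<in> std n G d. kap a = v}"

lemma supp_gp: "supp_in f (KK d v) \<Longrightarrow> f \<in> graded_piece n G d"
  unfolding supp_in_def KK_def graded_piece_def by auto

lemma up_gp: "up d f \<in> graded_piece n G (Suc d)"
  unfolding up_def mult_lin_def graded_piece_def by auto

lemma lo_gp: "lo (Suc d) f \<in> graded_piece n G d"
  unfolding lo_def graded_piece_def by auto

lemma up_KK:
  assumes f: "supp_in f (KK d v)" shows "supp_in (up d f) (KK (Suc d) (v - 2))"
  unfolding supp_in_def
proof (intro allI impI)
  fix y assume y: "y \<notin> KK (Suc d) (v - 2)"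
  show "up d f y = 0"
  proof (cases "y \<in> std n G (Suc d)")
    case False then show ?thesis unfolding up_def mult_lin_def by simp
  next
    case True
    then have ky: "kap y \<noteq> v - 2" using y unfolding KK_def by simp
    have "(\<Sum>i<n. if 1 \<le> y i \<and> y(i := y i - 1) \<in> std n G d then cc i * f (y(i := y i - 1)) else 0) = 0"
    proof (rule sum.neutral, rule ballI)
      fix i assume "i \<in> {..<n}"
      show "(if 1 \<le> y i \<and> y(i := y i - 1) \<in> std n G d then cc i * f (y(i := y i - 1)) else 0) = 0"
      proof (cases "1 \<le> y i \<and> i \<notin> Z")
        case c: True
        then have yi: "y i = 1" using zo'[OF True, of i] by simp
        have "kap (y(i:=0)) = kap y + 2" using kshift[OF True yi] c by simp
        then have "y(i:=0) \<notin> KK d v" using ky unfolding KK_def by auto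
        then show ?thesis using f yi unfolding supp_in_def by simp
      next
        case False then show ?thesis unfolding cc_def by auto
      qed
    qed
    then show ?thesis unfolding up_def mult_lin_def by simp
  qed
qed

lemma lo_KK:
  assumes g: "supp_in g (KK e v)" shows "supp_in (lo e g) (KK (e - 1) (v + 2))"
  unfolding supp_in_def
proof (intro allI impI)
  fix x assume x: "x \<notin> KK (e - 1) (v + 2)"
  show "lo e g x = 0"
  proof (cases "0 < e \<and> x \<in> std n G (e - 1)")
    case False then show ?thesis unfolding lo_def by auto
  next
    case True
    then have kx: "kap x \<noteq> v + 2" using x unfolding KK_def by simp
    have eS: "Suc (e - 1) = e" using True by simp
    have "(\<Sum>i<n. if x i = 0 \<and> x(i:=1) \<in> std n G e then cc i * g (x(i:=1)) else 0) = 0"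
    proof (rule sum.neutral, rule ballI)
      fix i assume "i \<in> {..<n}"
      show "(if x i = 0 \<and> x(i:=1) \<in> std n G e then cc i * g (x(i:=1)) else 0) = 0"
      proof (cases "x i = 0 \<and> x(i:=1) \<in> std n G e \<and> i \<notin> Z")
        case c: True
        have b: "x(i:=1) \<in> std n G (Suc (e - 1))" using c eS by simp
        have "kap ((x(i:=1))(i:=0)) = kap (x(i:=1)) + 2" by (rule kshift[OF b]) (use c in auto)
        moreover have "(x(i:=1))(i:=0) = x" using c by (simp add: fun_upd_idem)
        ultimately have "x(i:=1) \<notin> KK e v" using kx unfolding KK_def by auto
        then show ?thesis using g unfolding supp_in_def by simp
      next
        case False then show ?thesis unfolding cc_def by auto
      qed
    qed
    then show ?thesis unfolding lo_def using True by simp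
  qed
qed


lemma kap_supp: "supp_in h (KK e w) \<Longrightarrow> of_int (kap x) * h x = of_int w * h x"
  unfolding supp_in_def KK_def by (cases "x \<in> std n G e \<and> kap x = w") auto

lemma supp_add: "supp_in f X \<Longrightarrow> supp_in g X \<Longrightarrow> supp_in (\<lambda>x. f x + r * g x) X"
  unfolding supp_in_def by simp

lemma std_empty: assumes "n < d" shows "std n G d = {}"
proof (rule ccontr)
  assume "std n G d \<noteq> {}"
  then obtain a where a: "a \<in> std n G d" by auto
  have "d = (\<Sum>i<n. a i)" using a unfolding std_def mon_deg_def by simp
  also have "\<dots> \<le> (\<Sum>i<n. 1)" by (rule sum_mono) (use zo[OF a] in auto)
  finally show False using assms by simp
qed

primrec lopow :: "nat \<Rightarrow> nat \<Rightarrow> (monomial \<Rightarrow> 'k::field) \<Rightarrow> (monomial \<Rightarrow> 'k)" where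
  "lopow 0 d f = f"
| "lopow (Suc k) d f = lo (d - k) (lopow k d f)"

lemma lopow_KK: "supp_in f (KK d v) \<Longrightarrow> supp_in (lopow k d f) (KK (d - k) (v + 2 * int k))"
proof (induction k)
  case 0 then show ?case by simp
next
  case (Suc k)
  have "supp_in (lo (d - k) (lopow k d f)) (KK (d - k - 1) (v + 2 * int k + 2))"
    by (rule lo_KK) (use Suc in simp)
  then show ?case by (simp add: algebra_simps)
qed

lemma inj_step:
  fixes f :: "monomial \<Rightarrow> 'k::field"
  assumes f: "supp_in f (KK d v)" and uf: "up d f = (\<lambda>_. 0)"
  shows "k \<le> d \<Longrightarrow> up (d - Suc k) (lopow (Suc k) d f) = (\<lambda>x. - of_int (int (Suc k) * (v + int k)) * lopow k d f x)"
proof (induction k)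
  case 0
  show ?case
  proof (rule ext)
    fix x
    have "lo (Suc d) (up d f) x - up (d - 1) (lo d f) x = of_int (kap x) * f x"
      by (rule comm) (rule supp_gp[OF f])
    then show "up (d - Suc 0) (lopow (Suc 0) d f) x = - of_int (int (Suc 0) * (v + int 0)) * lopow 0 d f x"
      using kap_supp[OF f, of x] by (simp add: uf lo_zero minus_equation_iff)
  qed
next
  case (Suc k)
  then have kd: "k < d" by simp
  define h where "h = lopow (Suc k) d f"
  define e where "e = d - Suc k"
  have hK: "supp_in h (KK e (v + 2 * int (Suc k)))" unfolding h_def e_def by (rule lopow_KK[OF f])
  have Se: "Suc e = d - k" unfolding e_def using kd by simp
  have IH: "up e h = (\<lambda>x. - of_int (int (Suc k) * (v + int k)) * lopow k d f x)"
    unfolding e_def h_def using Suc kd by simp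
  have l1: "lo (Suc e) (up e h) = (\<lambda>x. - of_int (int (Suc k) * (v + int k)) * h x)"
  proof -
    have "lo (Suc e) (up e h) = (\<lambda>x. - of_int (int (Suc k) * (v + int k)) * lo (Suc e) (lopow k d f) x)"
      by (simp only: IH lo_scale)
    also have "lo (Suc e) (lopow k d f) = h" unfolding Se h_def by simp
    finally show ?thesis .
  qed
  have l2: "up (d - Suc (Suc k)) (lopow (Suc (Suc k)) d f) = up (e - 1) (lo e h)"
    unfolding e_def h_def by simp
  have ar: "int (Suc k) * (v + int k) + (v + 2 * int (Suc k)) = int (Suc (Suc k)) * (v + int (Suc k))"
    by (simp add: algebra_simps)
  show ?case
  proof (rule ext)
    fix x
    have "lo (Suc e) (up e h) x - up (e - 1) (lo e h) x = of_int (kap x) * h x"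
      by (rule comm) (rule supp_gp[OF hK])
    then have C: "lo (Suc e) (up e h) x - up (e - 1) (lo e h) x = of_int (v + 2 * int (Suc k)) * h x"
      using kap_supp[OF hK, of x] by simp
    have A: "lo (Suc e) (up e h) x = - of_int (int (Suc k) * (v + int k)) * h x" using l1 by simp
    have "up (e - 1) (lo e h) x = lo (Suc e) (up e h) x - of_int (v + 2 * int (Suc k)) * h x"
      by (simp only: C[symmetric]) simp
    then have "up (e - 1) (lo e h) x = - of_int (int (Suc k) * (v + int k)) * h x - of_int (v + 2 * int (Suc k)) * h x"
      using A by simp
    also have "\<dots> = - of_int (int (Suc (Suc k)) * (v + int (Suc k))) * h x"
      unfolding ar[symmetric] of_int_add by (simp add: ring_distribs)
    finally show "up (d - Suc (Suc k)) (lopow (Suc (Suc k)) d f) x = - of_int (int (Suc (Suc k)) * (v + int (Suc k))) * lopow (Suc k) d f x"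
      unfolding l2 h_def .
  qed
qed

lemma inj_block:
  fixes f :: "monomial \<Rightarrow> 'k::field_char_0"
  assumes f: "supp_in f (KK d v)" and uf: "up d f = (\<lambda>_. 0)" and v: "1 \<le> v"
  shows "f = (\<lambda>_. 0)"
proof -
  have "m \<le> Suc d \<Longrightarrow> lopow (Suc d - m) d f = (\<lambda>_. 0)" for m
  proof (induction m)
    case 0 show ?case by (simp add: lo_def)
  next
    case (Suc m)
    define k where "k = d - m"
    have k: "k \<le> d" "Suc k = Suc d - m" "k = Suc d - Suc m" using Suc.prems unfolding k_def by auto
    have "lopow (Suc d - m) d f = (\<lambda>_. 0)" using Suc.IH Suc.prems by simp
    then have z: "lopow (Suc k) d f = (\<lambda>_. 0)" by (simp only: k(2))
    have "up (d - Suc k) (lopow (Suc k) d f) = (\<lambda>x. - of_int (int (Suc k) * (v + int k)) * lopow k d f x)"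
      by (rule inj_step[OF f uf k(1)])
    then have "\<forall>x. of_int (int (Suc k) * (v + int k)) * lopow k d f x = (0::'k)"
      unfolding z up_zero fun_eq_iff by (simp only: mult_minus_left neg_0_equal_iff_equal) simp
    moreover have "int (Suc k) * (v + int k) \<noteq> 0" using v by simp
    then have "of_int (int (Suc k) * (v + int k)) \<noteq> (0::'k)" using of_int_eq_0_iff by blast
    ultimately have "lopow k d f = (\<lambda>_. 0)" by auto
    then show ?case by (simp only: k(3))
  qed
  from this[of "Suc d"] show ?thesis by simp
qed


primrec uppow :: "nat \<Rightarrow> nat \<Rightarrow> (monomial \<Rightarrow> 'k::field) \<Rightarrow> (monomial \<Rightarrow> 'k)" where
  "uppow 0 l g = g"
| "uppow (Suc k) l g = up (l + k) (uppow k l g)"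

lemma uppow_KK: "supp_in g (KK l v) \<Longrightarrow> supp_in (uppow k l g) (KK (l + k) (v - 2 * int k))"
proof (induction k)
  case 0 then show ?case by simp
next
  case (Suc k)
  have "supp_in (up (l + k) (uppow k l g)) (KK (Suc (l + k)) (v - 2 * int k - 2))"
    by (rule up_KK) (use Suc in simp)
  then show ?case by (simp add: algebra_simps)
qed

lemma uppow_shift: "uppow (Suc k) l y = uppow k (Suc l) (up l y)"
  by (induction k) simp_all

lemma uppow_lin: "uppow k l (\<lambda>x. g x + r * h x) = (\<lambda>x. uppow k l g x + r * uppow k l h x)"
  by (induction k) (simp_all add: up_add up_scale)

lemma uppow_zero: "uppow k l (\<lambda>_. 0) = (\<lambda>_. 0)"
  by (induction k) (simp_all add: up_zero)

lemma surj_step: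
  fixes g :: "monomial \<Rightarrow> 'k::field"
  assumes g: "supp_in g (KK l v)" and l: "1 \<le> l"
  shows "lo (l + k) (uppow k l g) = (\<lambda>x. uppow k (l - 1) (lo l g) x + of_int (int k * (v - int k + 1)) * uppow (k - 1) l g x)"
proof (induction k)
  case 0 show ?case by (rule ext) simp
next
  case (Suc k)
  define X where "X = uppow k l g"
  have XK: "supp_in X (KK (l + k) (v - 2 * int k))" unfolding X_def by (rule uppow_KK[OF g])
  have e1: "up (l + k - 1) (uppow k (l - 1) (lo l g)) = uppow (Suc k) (l - 1) (lo l g)"
    using l by (simp add: add.commute)
  have e2: "of_int (int k * (v - int k + 1)) * up (l + k - 1) (uppow (k - 1) l g) x
      = of_int (int k * (v - int k + 1)) * X x" for x
  proof (cases k)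
    case 0 then show ?thesis by simp
  next
    case (Suc k') then show ?thesis unfolding X_def by simp
  qed
  have ar: "int k * (v - int k + 1) + (v - 2 * int k) = int (Suc k) * (v - int (Suc k) + 1)"
    by (simp add: algebra_simps)
  show ?case
  proof (rule ext)
    fix x
    have C: "lo (Suc (l + k)) (up (l + k) X) x - up (l + k - 1) (lo (l + k) X) x = of_int (kap x) * X x"
      by (rule comm) (rule supp_gp[OF XK])
    have "lo (l + Suc k) (uppow (Suc k) l g) x = lo (Suc (l + k)) (up (l + k) X) x" unfolding X_def by simp
    also have "\<dots> = up (l + k - 1) (lo (l + k) X) x + of_int (v - 2 * int k) * X x"
      using C kap_supp[OF XK, of x] by (simp add: algebra_simps)
    also have "up (l + k - 1) (lo (l + k) X) x = uppow (Suc k) (l - 1) (lo l g) x + of_int (int k * (v - int k + 1)) * X x"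
      unfolding X_def Suc.IH up_add up_scale using e1 e2[unfolded X_def] by simp
    finally show "lo (l + Suc k) (uppow (Suc k) l g) x = uppow (Suc k) (l - 1) (lo l g) x + of_int (int (Suc k) * (v - int (Suc k) + 1)) * uppow (Suc k - 1) l g x"
      unfolding ar[symmetric] of_int_add X_def by (simp add: ring_distribs)
  qed
qed

lemma surj_block:
  fixes g :: "monomial \<Rightarrow> 'k::field_char_0"
  assumes v: "v \<le> -1" and l: "1 \<le> l"
  shows "supp_in g (KK l v) \<Longrightarrow> uppow k l g = (\<lambda>_. 0) \<Longrightarrow> g \<in> up (l - 1) ` graded_piece n G (l - 1)"
proof (induction k arbitrary: g)
  case 0
  then have "g = up (l - 1) (\<lambda>_. 0)" by (simp add: up_zero)
  moreover have "(\<lambda>_. 0) \<in> graded_piece n G (l - 1)" unfolding graded_piece_def by simp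
  ultimately show ?case by blast
next
  case (Suc k)
  define c where "c = (of_int (int (Suc k) * (v - int (Suc k) + 1)) :: 'k)"
  have "int (Suc k) * (v - int (Suc k) + 1) < 0" using v by (intro mult_pos_neg) auto
  then have "int (Suc k) * (v - int (Suc k) + 1) \<noteq> 0" by linarith
  then have c0: "c \<noteq> 0" unfolding c_def using of_int_eq_0_iff by blast
  have lS: "Suc (l - 1) = l" using l by simp
  define w where "w = up (l - 1) (lo l g)"
  have st: "lo (l + Suc k) (uppow (Suc k) l g) = (\<lambda>x. uppow (Suc k) (l - 1) (lo l g) x + c * uppow k l g x)"
    unfolding c_def using surj_step[OF Suc.prems(1) l, of "Suc k"] by simp
  have sh: "uppow (Suc k) (l - 1) (lo l g) = uppow k l w"
    unfolding w_def using uppow_shift[of k "l - 1" "lo l g"] lS by simp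
  have z: "uppow k l w x + c * uppow k l g x = 0" for x
    using fun_cong[OF st, of x] Suc.prems(2) sh by (simp add: lo_zero)
  define g' where "g' = (\<lambda>x. g x + inverse c * w x)"
  have "uppow k l g' = (\<lambda>x. uppow k l g x + inverse c * uppow k l w x)"
    unfolding g'_def by (rule uppow_lin)
  also have "\<dots> = (\<lambda>_. 0)"
  proof (rule ext)
    fix x
    have "uppow k l w x = - c * uppow k l g x" using z[of x] by (simp add: eq_neg_iff_add_eq_0)
    then show "uppow k l g x + inverse c * uppow k l w x = 0" using c0 by simp
  qed
  finally have g'0: "uppow k l g' = (\<lambda>_. 0)" .
  have wK: "supp_in w (KK l v)"
  proof -
    have "supp_in (lo l g) (KK (l - 1) (v + 2))" by (rule lo_KK[OF Suc.prems(1)])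
    from up_KK[OF this] show ?thesis unfolding w_def using lS by simp
  qed
  have g'K: "supp_in g' (KK l v)" unfolding g'_def by (rule supp_add[OF Suc.prems(1) wK])
  obtain h where h: "h \<in> graded_piece n G (l - 1)" "g' = up (l - 1) h"
    using Suc.IH[OF g'K g'0] by blast
  have "g = (\<lambda>x. g' x - inverse c * w x)" unfolding g'_def by simp
  also have "\<dots> = up (l - 1) (\<lambda>x. h x - inverse c * lo l g x)"
    unfolding h(2) w_def up_diff up_scale by simp
  finally have "g = up (l - 1) (\<lambda>x. h x - inverse c * lo l g x)" .
  moreover have "(\<lambda>x. h x - inverse c * lo l g x) \<in> graded_piece n G (l - 1)"
  proof -
    have "lo l g \<in> graded_piece n G (l - 1)" using lo_gp[of "l - 1" g] lS by simp
    then show ?thesis using h(1) unfolding graded_piece_def by simp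
  qed
  ultimately show ?case by blast
qed


lemma up_restrict:
  "up d (\<lambda>x. if kap x = v then f x else 0) y = (if kap y = v - 2 then up d f y else 0)"
proof (cases "y \<in> std n G (Suc d)")
  case False then show ?thesis unfolding up_def mult_lin_def by simp
next
  case True
  have "(\<Sum>i<n. if 1 \<le> y i \<and> y(i := y i - 1) \<in> std n G d then cc i * (if kap (y(i := y i - 1)) = v then f (y(i := y i - 1)) else 0) else 0)
      = (\<Sum>i<n. if kap y = v - 2 then (if 1 \<le> y i \<and> y(i := y i - 1) \<in> std n G d then cc i * f (y(i := y i - 1)) else 0) else 0)"
  proof (rule sum.cong[OF refl])
    fix i assume "i \<in> {..<n}"
    show "(if 1 \<le> y i \<and> y(i := y i - 1) \<in> std n G d then cc i * (if kap (y(i := y i - 1)) = v then f (y(i := y i - 1)) else 0) else 0)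
      = (if kap y = v - 2 then (if 1 \<le> y i \<and> y(i := y i - 1) \<in> std n G d then cc i * f (y(i := y i - 1)) else 0) else 0)"
    proof (cases "1 \<le> y i \<and> i \<notin> Z")
      case c: True
      then have yi: "y i = 1" using zo'[OF True, of i] by simp
      have "kap (y(i:=0)) = kap y + 2" using kshift[OF True yi] c by simp
      then show ?thesis using yi by auto
    next
      case False then show ?thesis unfolding cc_def by auto
    qed
  qed
  also have "\<dots> = (if kap y = v - 2 then (\<Sum>i<n. if 1 \<le> y i \<and> y(i := y i - 1) \<in> std n G d then cc i * f (y(i := y i - 1)) else 0) else 0)"
    by simp
  finally show ?thesis unfolding up_def mult_lin_def using True by simp
qed

lemma inj_all:
  assumes K: "\<forall>a\<in>std n G d. 1 \<le> kap a"
  shows "inj_on (up d :: (monomial \<Rightarrow> 'k::field_char_0) \<Rightarrow> _) (graded_piece n G d)"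
proof (rule inj_onI)
  fix f1 f2 :: "monomial \<Rightarrow> 'k"
  assume f1: "f1 \<in> graded_piece n G d" and f2: "f2 \<in> graded_piece n G d" and eq: "up d f1 = up d f2"
  define f where "f = (\<lambda>x. f1 x - f2 x)"
  have uf: "up d f = (\<lambda>_. 0)" unfolding f_def up_diff eq by simp
  have fgp: "f \<in> graded_piece n G d" using f1 f2 unfolding f_def graded_piece_def by simp
  have "f x = 0" for x
  proof (cases "x \<in> std n G d")
    case False then show ?thesis using fgp unfolding graded_piece_def by simp
  next
    case True
    define v where "v = kap x"
    define fv where "fv = (\<lambda>y. if kap y = v then f y else 0)"
    have fvK: "supp_in fv (KK d v)" using fgp unfolding fv_def supp_in_def KK_def graded_piece_def by auto
    have "up d fv = (\<lambda>_. 0)" unfolding fv_def by (rule ext) (simp add: up_restrict uf)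
    from inj_block[OF fvK this] have "fv = (\<lambda>_. 0)" using K True unfolding v_def by simp
    then show ?thesis using fun_cong[of fv "\<lambda>_. 0" x] unfolding fv_def v_def by simp
  qed
  then show "f1 = f2" unfolding f_def by (simp add: fun_eq_iff)
qed

lemma surj_all:
  assumes K: "\<forall>b\<in>std n G (Suc d). kap b \<le> -1"
  shows "(up d :: (monomial \<Rightarrow> 'k::field_char_0) \<Rightarrow> _) ` graded_piece n G d = graded_piece n G (Suc d)"
proof
  show "(up d :: (monomial \<Rightarrow> 'k) \<Rightarrow> _) ` graded_piece n G d \<subseteq> graded_piece n G (Suc d)"
    using up_gp by blast
next
  let ?Im = "(up d :: (monomial \<Rightarrow> 'k) \<Rightarrow> _) ` graded_piece n G d"
  have add: "(\<lambda>x. p x + q x) \<in> ?Im" if pq: "p \<in> ?Im" "q \<in> ?Im" for p q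
  proof -
    obtain h1 h2 where h: "h1 \<in> graded_piece n G d" "h2 \<in> graded_piece n G d" "p = up d h1" "q = up d h2"
      using pq by blast
    then have "(\<lambda>x. p x + q x) = up d (\<lambda>x. h1 x + h2 x)" by (simp add: up_add)
    moreover have "(\<lambda>x. h1 x + h2 x) \<in> graded_piece n G d" using h unfolding graded_piece_def by simp
    ultimately show ?thesis by blast
  qed
  have zero: "(\<lambda>_. 0) \<in> ?Im"
  proof -
    have "(\<lambda>_. 0) \<in> graded_piece n G d" unfolding graded_piece_def by simp
    then have "up d (\<lambda>_. 0) \<in> ?Im" by (rule imageI)
    then show ?thesis by (simp only: up_zero)
  qed
  have sums: "finite V \<Longrightarrow> (\<forall>v\<in>V. F v \<in> ?Im) \<Longrightarrow> (\<lambda>x. \<Sum>v\<in>V. F v x) \<in> ?Im" for V F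
  proof (induction V rule: finite_induct)
    case empty then show ?case using zero by simp
  next
    case (insert a V)
    then show ?case using add[of "F a" "\<lambda>x. \<Sum>v\<in>V. F v x"] by simp
  qed
  show "graded_piece n G (Suc d) \<subseteq> ?Im"
  proof
    fix g :: "monomial \<Rightarrow> 'k" assume g: "g \<in> graded_piece n G (Suc d)"
    define V where "V = kap ` std n G (Suc d)"
    have fV: "finite V" unfolding V_def using std_fin by simp
    have each: "(\<lambda>x. if kap x = v then g x else 0) \<in> ?Im" if v: "v \<in> V" for v
    proof -
      define gv where "gv = (\<lambda>x. if kap x = v then g x else 0)"
      have gvK: "supp_in gv (KK (Suc d) v)" using g unfolding gv_def supp_in_def KK_def graded_piece_def by auto
      have vn: "v \<le> -1" using v K unfolding V_def by auto
      have "supp_in (uppow (Suc n) (Suc d) gv) (KK (Suc d + Suc n) (v - 2 * int (Suc n)))"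
        by (rule uppow_KK[OF gvK])
      moreover have "KK (Suc d + Suc n) (v - 2 * int (Suc n)) = {}"
        unfolding KK_def using std_empty[of "Suc d + Suc n"] by simp
      ultimately have "uppow (Suc n) (Suc d) gv = (\<lambda>_. 0)" unfolding supp_in_def by auto
      from surj_block[OF vn _ gvK this] show ?thesis unfolding gv_def by simp
    qed
    have "(\<lambda>x. \<Sum>v\<in>V. if kap x = v then g x else 0) \<in> ?Im"
      by (rule sums[OF fV]) (use each in blast)
    moreover have "(\<lambda>x. \<Sum>v\<in>V. if kap x = v then g x else 0) = g"
    proof (rule ext)
      fix x
      have "(\<Sum>v\<in>V. if kap x = v then g x else 0) = (if kap x \<in> V then g x else 0)"
        using fV by (simp add: sum.delta)
      also have "\<dots> = g x" using g unfolding V_def graded_piece_def by auto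
      finally show "(\<Sum>v\<in>V. if kap x = v then g x else 0) = g x" .
    qed
    ultimately show "g \<in> ?Im" by simp
  qed
qed


lemma deg_card: assumes a: "a \<in> std n G s" shows "s = card {i. i < n \<and> a i = 1}"
proof -
  have "s = (\<Sum>i<n. a i)" using a unfolding std_def mon_deg_def by simp
  also have "\<dots> = (\<Sum>i<n. if a i = 1 then 1 else 0)"
    by (rule sum.cong) (use zo'[OF a] in \<open>auto\<close>)
  also have "\<dots> = card {i\<in>{..<n}. a i = 1}" using card_sum_if[of "{..<n}" "\<lambda>i. a i = 1", where 'a=nat] by simp
  also have "{i\<in>{..<n}. a i = 1} = {i. i < n \<and> a i = 1}" by auto
  finally show ?thesis .
qed

lemma kap_formula:
  assumes Zn: "Z \<subseteq> {..<n}" and a: "a \<in> std n G s"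
    and X: "X \<subseteq> {i. i < n \<and> i \<notin> Z \<and> a i = 0}"
    and NX: "\<And>i. i < n \<Longrightarrow> i \<notin> Z \<Longrightarrow> a i = 0 \<Longrightarrow> (a(i:=1) \<in> std n G (Suc s) \<longleftrightarrow> i \<notin> X)"
  shows "kap a = int n - int (card Z) - 2 * int s + 2 * int (card {i\<in>Z. a i = 1}) - int (card X)"
proof -
  have fZ: "finite Z" using Zn finite_subset by blast
  define A0 where "A0 = {i. i < n \<and> i \<notin> Z \<and> a i = 0}"
  define A1 where "A1 = {i. i < n \<and> i \<notin> Z \<and> a i = 1}"
  have md: "mon_deg n a = s" using a unfolding std_def by simp
  have fA0: "finite A0" unfolding A0_def by simp
  have nn: "{i. i < n \<and> i \<notin> Z \<and> a i = 0 \<and> a(i:=1) \<in> std n G (Suc (mon_deg n a))} = A0 - X"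
    unfolding A0_def md using NX by auto
  have NN: "NN a = card A0 - card X" unfolding NN_def nn
  proof (rule card_Diff_subset)
    show "finite X" using finite_subset[OF X] by simp
  qed (use X in \<open>auto simp: A0_def\<close>)
  have cX: "card X \<le> card A0" using X fA0 unfolding A0_def by (intro card_mono) auto
  have MM: "MM a = card A1" unfolding MM_def A1_def by simp
  have u: "{..<n} - Z = A0 \<union> A1" unfolding A0_def A1_def using zo'[OF a] by auto
  have c01: "card A0 + card A1 = n - card Z"
  proof -
    have "card ({..<n} - Z) = n - card Z" using Zn by (simp add: card_Diff_subset fZ)
    moreover have "card (A0 \<union> A1) = card A0 + card A1"
      by (rule card_Un_disjoint) (auto simp: A0_def A1_def)
    ultimately show ?thesis using u by simp
  qed
  have cZ: "card Z \<le> n" using Zn by (metis card_lessThan card_mono finite_lessThan)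
  have s1: "{i. i < n \<and> a i = 1} = A1 \<union> {i\<in>Z. a i = 1}" unfolding A1_def using Zn by auto
  have s2: "s = card A1 + card {i\<in>Z. a i = 1}"
  proof -
    have "card (A1 \<union> {i\<in>Z. a i = 1}) = card A1 + card {i\<in>Z. a i = 1}"
      by (rule card_Un_disjoint) (auto simp: A1_def fZ)
    then show ?thesis using deg_card[OF a] s1 by simp
  qed
  show ?thesis unfolding kap_def NN MM using c01 cX cZ s2 by simp
qed


end


lemma le1: "(x::nat) \<le> 1 \<Longrightarrow> (1 \<le> x) = (x = 1)" by auto

lemma edge_upd:
  fixes a :: monomial
  assumes "i \<noteq> v" "a v \<le> 1" "\<not>(1 \<le> a u \<and> 1 \<le> a v)"
  shows "(\<not>(1 \<le> (a(i:=1)) u \<and> 1 \<le> (a(i:=1)) v)) \<longleftrightarrow> \<not>(i = u \<and> a v = 1)"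
  using assms le1[OF assms(2)] by (cases "i = u") auto

lemma edge_upd2:
  fixes a :: monomial
  assumes "i \<noteq> u" "a u \<le> 1" "\<not>(1 \<le> a u \<and> 1 \<le> a v)"
  shows "(\<not>(1 \<le> (a(i:=1)) u \<and> 1 \<le> (a(i:=1)) v)) \<longleftrightarrow> \<not>(i = v \<and> a u = 1)"
  using assms le1[OF assms(2)] by (cases "i = v") auto

lemma edge_exch:
  assumes a: "\<not>(1 \<le> a u \<and> 1 \<le> a v)" and b: "\<not>(1 \<le> ((a(j:=0))(i:=1)) u \<and> 1 \<le> ((a(j:=0))(i:=1)) v)"
    and ne: "u \<noteq> v" and cov: "u \<in> Z \<or> v \<in> Z" and iZ: "i \<notin> Z" and jZ: "j \<notin> Z"
  shows "\<not>(1 \<le> (a(i:=1)) u \<and> 1 \<le> (a(i:=1)) v)"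
proof (cases "i = u")
  case True
  then have "v \<in> Z" using cov iZ by auto
  then have "v \<noteq> j" "v \<noteq> i" using jZ iZ by auto
  then show ?thesis using b True by simp
next
  case F1: False
  show ?thesis
  proof (cases "i = v")
    case True
    then have "u \<in> Z" using cov iZ by auto
    then have "u \<noteq> j" "u \<noteq> i" using jZ iZ by auto
    then show ?thesis using b True by simp
  next
    case False then show ?thesis using a F1 by simp
  qed
qed

context wsetup begin
lemma boundA:
  assumes Zd: "Z = {v1, v2}"
    and H: "\<And>a d. (a \<in> std n G d) = (is_mon n a \<and> mon_deg n a = d \<and> (\<forall>j. a j \<le> 1) \<and> \<not>(1 \<le> a u1 \<and> 1 \<le> a v1) \<and> \<not>(1 \<le> a u2 \<and> 1 \<le> a v2))"
    and dist: "distinct [u1, v1, u2, v2]" and lt: "u1 < n" "v1 < n" "u2 < n" "v2 < n"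
    and a: "a \<in> std n G s"
  shows "int n - 2 - 2 * int s \<le> kap a \<and> kap a \<le> int n - 2 * int s"
proof -
  define X where "X = (if a v1 = 1 then {u1} else {}) \<union> (if a v2 = 1 then {u2} else {})"
  have aH: "is_mon n a" "mon_deg n a = s" "\<forall>j. a j \<le> 1" "\<not>(1 \<le> a u1 \<and> 1 \<le> a v1)" "\<not>(1 \<le> a u2 \<and> 1 \<le> a v2)"
    using H[of a s] a by auto
  have Zn: "Z \<subseteq> {..<n}" using Zd lt by auto
  have p1: "a v1 = 1 \<Longrightarrow> u1 < n \<and> u1 \<notin> Z \<and> a u1 = 0" using aH(4) dist lt Zd by auto
  have p2: "a v2 = 1 \<Longrightarrow> u2 < n \<and> u2 \<notin> Z \<and> a u2 = 0" using aH(5) dist lt Zd by auto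
  have X: "X \<subseteq> {i. i < n \<and> i \<notin> Z \<and> a i = 0}"
    unfolding X_def using p1 p2 by auto
  have NX: "a(i:=1) \<in> std n G (Suc s) \<longleftrightarrow> i \<notin> X" if i: "i < n" "i \<notin> Z" "a i = 0" for i
  proof -
    have md: "mon_deg n (a(i:=1)) = Suc s" using mon_deg_upd[OF i(1), of a 1] aH(2) i(3) by simp
    have im: "is_mon n (a(i:=1))" using aH(1) i(1) unfolding is_mon_def by auto
    have z1: "\<forall>k. (a(i:=1)) k \<le> 1" using aH(3) by simp
    have "a(i:=1) \<in> std n G (Suc s) \<longleftrightarrow> \<not>(1 \<le> (a(i:=1)) u1 \<and> 1 \<le> (a(i:=1)) v1) \<and> \<not>(1 \<le> (a(i:=1)) u2 \<and> 1 \<le> (a(i:=1)) v2)"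
      using H[of "a(i:=1)" "Suc s"] md im z1 by blast
    also have "\<dots> \<longleftrightarrow> \<not>(i = u1 \<and> a v1 = 1) \<and> \<not>(i = u2 \<and> a v2 = 1)"
      using edge_upd[of i v1 a u1] edge_upd[of i v2 a u2] i(2) Zd aH(3,4,5)
        le1[OF aH(3)[rule_format, of v1]] le1[OF aH(3)[rule_format, of v2]] by simp
    also have "\<dots> \<longleftrightarrow> i \<notin> X" unfolding X_def by auto
    finally show ?thesis .
  qed
  have kf: "kap a = int n - int (card Z) - 2 * int s + 2 * int (card {i\<in>Z. a i = 1}) - int (card X)"
    by (rule kap_formula[OF Zn a X NX])
  have cZ: "card Z = 2" using Zd dist by simp
  have "card {i\<in>Z. a i = 1} = card X \<and> card X \<le> 2"
  proof (cases "a v1 = 1"; cases "a v2 = 1")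
    assume "a v1 = 1" "a v2 = 1"
    then have "{i\<in>Z. a i = 1} = {v1, v2}" "X = {u1, u2}" unfolding Zd X_def by auto
    then show ?thesis using dist by simp
  next
    assume "a v1 = 1" "a v2 \<noteq> 1"
    then have "{i\<in>Z. a i = 1} = {v1}" "X = {u1}" unfolding Zd X_def by auto
    then show ?thesis by simp
  next
    assume "a v1 \<noteq> 1" "a v2 = 1"
    then have "{i\<in>Z. a i = 1} = {v2}" "X = {u2}" unfolding Zd X_def by auto
    then show ?thesis by simp
  next
    assume "a v1 \<noteq> 1" "a v2 \<noteq> 1"
    then have e: "{i\<in>Z. a i = 1} = {}" "X = {}" unfolding Zd X_def by auto
    show ?thesis unfolding e by simp
  qed
  then show ?thesis using kf cZ by simp
qed

lemma boundB:
  assumes Zd: "Z = {y}"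
    and H: "\<And>a d. (a \<in> std n G d) = (is_mon n a \<and> mon_deg n a = d \<and> (\<forall>j. a j \<le> 1) \<and> \<not>(1 \<le> a x \<and> 1 \<le> a y) \<and> \<not>(1 \<le> a y \<and> 1 \<le> a z))"
    and dist: "distinct [x, y, z]" and lt: "x < n" "y < n" "z < n"
    and a: "a \<in> std n G s"
  shows "int n - 2 - 2 * int s \<le> kap a \<and> kap a \<le> int n - 2 * int s"
proof -
  define X where "X = (if a y = 1 then {x, z} else {})"
  have aH: "is_mon n a" "mon_deg n a = s" "\<forall>j. a j \<le> 1" "\<not>(1 \<le> a x \<and> 1 \<le> a y)" "\<not>(1 \<le> a y \<and> 1 \<le> a z)"
    using H[of a s] a by auto
  have Zn: "Z \<subseteq> {..<n}" using Zd lt by auto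
  have p1: "a y = 1 \<Longrightarrow> x < n \<and> x \<notin> Z \<and> a x = 0 \<and> z < n \<and> z \<notin> Z \<and> a z = 0"
    using aH(4,5) dist lt Zd by auto
  have X: "X \<subseteq> {i. i < n \<and> i \<notin> Z \<and> a i = 0}"
    unfolding X_def using p1 by auto
  have NX: "a(i:=1) \<in> std n G (Suc s) \<longleftrightarrow> i \<notin> X" if i: "i < n" "i \<notin> Z" "a i = 0" for i
  proof -
    have md: "mon_deg n (a(i:=1)) = Suc s" using mon_deg_upd[OF i(1), of a 1] aH(2) i(3) by simp
    have im: "is_mon n (a(i:=1))" using aH(1) i(1) unfolding is_mon_def by auto
    have z1: "\<forall>k. (a(i:=1)) k \<le> 1" using aH(3) by simp
    have "a(i:=1) \<in> std n G (Suc s) \<longleftrightarrow> \<not>(1 \<le> (a(i:=1)) x \<and> 1 \<le> (a(i:=1)) y) \<and> \<not>(1 \<le> (a(i:=1)) y \<and> 1 \<le> (a(i:=1)) z)"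
      using H[of "a(i:=1)" "Suc s"] md im z1 by blast
    also have "\<dots> \<longleftrightarrow> \<not>(i = x \<and> a y = 1) \<and> \<not>(i = z \<and> a y = 1)"
      using edge_upd[of i y a x] edge_upd2[of i y a z] i(2) Zd aH(3,4,5)
        le1[OF aH(3)[rule_format, of y]] by simp
    also have "\<dots> \<longleftrightarrow> i \<notin> X" unfolding X_def by auto
    finally show ?thesis .
  qed
  have kf: "kap a = int n - int (card Z) - 2 * int s + 2 * int (card {i\<in>Z. a i = 1}) - int (card X)"
    by (rule kap_formula[OF Zn a X NX])
  have cZ: "card Z = 1" using Zd by simp
  have "2 * card {i\<in>Z. a i = 1} = card X"
  proof (cases "a y = 1")
    case True
    then have "{i\<in>Z. a i = 1} = {y}" "X = {x, z}" unfolding Zd X_def by auto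
    then show ?thesis using dist by simp
  next
    case False
    then have e: "{i\<in>Z. a i = 1} = {}" "X = {}" unfolding Zd X_def by auto
    show ?thesis unfolding e by simp
  qed
  then show ?thesis using kf cZ by simp
qed

end

lemma setupE:
  assumes H: "\<And>a d. (a \<in> std n G d) = (is_mon n a \<and> mon_deg n a = d \<and> (\<forall>j. a j \<le> 1) \<and> \<not>(1 \<le> a u1 \<and> 1 \<le> a v1) \<and> \<not>(1 \<le> a u2 \<and> 1 \<le> a v2))"
    and ne: "u1 \<noteq> v1" "u2 \<noteq> v2" and cov: "u1 \<in> Z \<or> v1 \<in> Z" "u2 \<in> Z \<or> v2 \<in> Z"
  shows "wsetup n G Z"
proof
  fix a d i assume "a \<in> std n G d" then show "a i \<le> 1" using H by auto
next
  fix a d i j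
  assume a: "a \<in> std n G d" and ai: "a i = 0" and aj: "a j = 1" and ij: "i \<noteq> j" and iZ: "i \<notin> Z" and jZ: "j \<notin> Z"
    and i: "i < n" and b: "(a(j:=0))(i:=1) \<in> std n G d"
  have aH: "is_mon n a" "mon_deg n a = d" "\<forall>j. a j \<le> 1" "\<not>(1 \<le> a u1 \<and> 1 \<le> a v1)" "\<not>(1 \<le> a u2 \<and> 1 \<le> a v2)"
    using H[of a d] a by auto
  have bH: "\<not>(1 \<le> ((a(j:=0))(i:=1)) u1 \<and> 1 \<le> ((a(j:=0))(i:=1)) v1)" "\<not>(1 \<le> ((a(j:=0))(i:=1)) u2 \<and> 1 \<le> ((a(j:=0))(i:=1)) v2)"
    using H[of "(a(j:=0))(i:=1)" d] b by auto
  have md: "mon_deg n (a(i:=1)) = Suc d" using mon_deg_upd[OF i, of a 1] aH(2) ai by simp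
  have im: "is_mon n (a(i:=1))" using aH(1) i unfolding is_mon_def by auto
  have e1: "\<not>(1 \<le> (a(i:=1)) u1 \<and> 1 \<le> (a(i:=1)) v1)"
    by (rule edge_exch[OF aH(4) bH(1) ne(1) cov(1) iZ jZ])
  have e2: "\<not>(1 \<le> (a(i:=1)) u2 \<and> 1 \<le> (a(i:=1)) v2)"
    by (rule edge_exch[OF aH(5) bH(2) ne(2) cov(2) iZ jZ])
  have z1: "\<forall>k. (a(i:=1)) k \<le> 1" using aH(3) by simp
  show "a(i:=1) \<in> std n G (Suc d)" using H[of "a(i:=1)" "Suc d"] md im e1 e2 z1 by blast
qed



context wsetup begin

lemma wlp_from_bounds:
  assumes B: "\<And>a s. a \<in> std n G s \<Longrightarrow> int n - 2 - 2 * int s \<le> kap a \<and> kap a \<le> int n - 2 * int s"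
    and od: "odd n"
  shows "has_WLP TYPE('k::field_char_0) n G"
  unfolding has_WLP_def
proof (intro exI allI)
  fix d
  obtain m where m: "n = 2 * m + 1" using od oddE by blast
  show "max_rank_at n G (cc :: nat \<Rightarrow> 'k) d"
  proof (cases "2 * d + 3 \<le> n")
    case True
    have "\<forall>a\<in>std n G d. 1 \<le> kap a"
    proof
      fix a assume "a \<in> std n G d"
      from B[OF this] True show "1 \<le> kap a" by linarith
    qed
    from inj_all[OF this] show ?thesis unfolding max_rank_at_def up_def by blast
  next
    case False
    have "\<forall>b\<in>std n G (Suc d). kap b \<le> -1"
    proof
      fix b assume "b \<in> std n G (Suc d)"
      have "n \<le> 2 * d + 1" using False m by presburger
      then have "int n \<le> 2 * int d + 1" by linarith
      with B[OF \<open>b \<in> std n G (Suc d)\<close>] show "kap b \<le> -1" by simp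
    qed
    from surj_all[OF this] show ?thesis unfolding max_rank_at_def up_def by blast
  qed
qed

end


definition sqm :: "nat \<Rightarrow> monomial" where "sqm j = (\<lambda>_. 0)(j := 2)"
definition edm :: "nat \<Rightarrow> nat \<Rightarrow> monomial" where "edm p q = (\<lambda>i. if i = p \<or> i = q then 1 else 0)"

lemma sum_single:
  fixes g :: "nat \<Rightarrow> nat"
  assumes "j < n" "\<forall>i. i \<noteq> j \<longrightarrow> g i = 0" shows "(\<Sum>i<n. g i) = g j"
proof -
  have "(\<Sum>i<n. g i) = (\<Sum>i<n. if i = j then g j else 0)" by (rule sum.cong) (use assms in auto)
  also have "\<dots> = g j" using assms(1) by simp
  finally show ?thesis .
qed

lemma sq_in:
  assumes deg: "\<forall>g\<in>G. is_mon n g \<and> mon_deg n g = 2" and art: "artinian_mon n G" and j: "j < n"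
  shows "sqm j \<in> G"
proof -
  obtain k where "in_mon_ideal G ((\<lambda>_. 0)(j := k))" using art j unfolding artinian_mon_def by blast
  then obtain g where g: "g \<in> G" "\<forall>i. g i \<le> ((\<lambda>_. 0)(j := k)) i" unfolding in_mon_ideal_def mon_dvd_def by blast
  have z: "\<forall>i. i \<noteq> j \<longrightarrow> g i = 0" using g(2) by (metis fun_upd_other le_zero_eq)
  have "mon_deg n g = g j" unfolding mon_deg_def by (rule sum_single[OF j z])
  then have "g j = 2" using deg g(1) by simp
  then have "g = sqm j" unfolding sqm_def using z by (auto simp: fun_eq_iff)
  then show ?thesis using g(1) by simp
qed

lemma nonsq_edge:
  assumes g: "is_mon n g" "mon_deg n g = 2" and ns: "\<forall>j<n. g \<noteq> sqm j"
  shows "\<exists>p q. p \<noteq> q \<and> p < n \<and> q < n \<and> g = edm p q"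
proof -
  have le1: "g j \<le> 1" for j
  proof (rule ccontr)
    assume "\<not> g j \<le> 1"
    then have j2: "2 \<le> g j" by simp
    have j: "j < n" using g(1) j2 unfolding is_mon_def by (metis not_le not_numeral_le_zero)
    have "g j \<le> (\<Sum>i<n. g i)" using j by (intro member_le_sum) auto
    then have gj: "g j = 2" using j2 g(2) unfolding mon_deg_def by simp
    have "(\<Sum>i<n. g i) = g j + (\<Sum>i\<in>{..<n}-{j}. g i)" using j by (simp add: sum.remove)
    then have "(\<Sum>i\<in>{..<n}-{j}. g i) = 0" using gj g(2) unfolding mon_deg_def by simp
    then have "\<forall>i\<in>{..<n}-{j}. g i = 0" by simp
    then have "g = sqm j" unfolding sqm_def using gj g(1) unfolding is_mon_def
      by (auto simp: fun_eq_iff) (metis Diff_iff lessThan_iff not_le singletonD)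
    then show False using ns j by simp
  qed
  have "(\<Sum>i<n. g i) = (\<Sum>i<n. if g i = 1 then 1 else 0)"
    by (rule sum.cong) (use le1 in \<open>auto simp: le_Suc_eq\<close>)
  also have "\<dots> = card {i\<in>{..<n}. g i = 1}" by (simp add: sum.If_cases Int_def conj_commute)
  finally have "card {i\<in>{..<n}. g i = 1} = 2" using g(2) unfolding mon_deg_def by simp
  then obtain p q where pq: "{i\<in>{..<n}. g i = 1} = {p, q}" "p \<noteq> q" by (meson card_2_iff)
  have "g = edm p q"
  proof (rule ext)
    fix i
    show "g i = edm p q i"
    proof (cases "i < n")
      case True
      have "g i = 1 \<longleftrightarrow> i = p \<or> i = q" using pq(1) True by blast
      then show ?thesis unfolding edm_def using le1[of i] by (auto simp: le_Suc_eq)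
    next
      case False
      then have "g i = 0" using g(1) unfolding is_mon_def by simp
      moreover have "i \<noteq> p" "i \<noteq> q" using pq(1) False by auto
      ultimately show ?thesis unfolding edm_def by simp
    qed
  qed
  moreover have "p < n" "q < n" using pq(1) by auto
  ultimately show ?thesis using pq(2) by blast
qed

lemma dvd_sq: "mon_dvd (sqm j) a \<longleftrightarrow> 2 \<le> a j"
  unfolding mon_dvd_def sqm_def by (auto simp: fun_upd_def)

lemma dvd_ed: "mon_dvd (edm p q) a \<longleftrightarrow> 1 \<le> a p \<and> 1 \<le> a q"
  unfolding mon_dvd_def edm_def by (auto split: if_splits)


lemma G_struct:
  assumes fin: "finite G" and cG: "card G = n + 2"
    and deg: "\<forall>g\<in>G. is_mon n g \<and> mon_deg n g = 2" and art: "artinian_mon n G"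
  shows "\<exists>p1 q1 p2 q2. p1 \<noteq> q1 \<and> p2 \<noteq> q2 \<and> p1 < n \<and> q1 < n \<and> p2 < n \<and> q2 < n \<and> {p1,q1} \<noteq> {p2,q2} \<and>
     (\<forall>a d. (a \<in> std n G d) = (is_mon n a \<and> mon_deg n a = d \<and> (\<forall>j. a j \<le> 1) \<and> \<not>(1 \<le> a p1 \<and> 1 \<le> a q1) \<and> \<not>(1 \<le> a p2 \<and> 1 \<le> a q2)))"
proof -
  define Sq where "Sq = sqm ` {..<n}"
  have SqG: "Sq \<subseteq> G" unfolding Sq_def using sq_in[OF deg art] by blast
  have inj: "inj_on sqm {..<n}"
  proof (rule inj_onI)
    fix i j assume "sqm i = sqm j"
    then have "sqm i i = sqm j i" by simp
    then show "i = j" unfolding sqm_def by (auto split: if_splits)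
  qed
  have cSq: "card Sq = n" unfolding Sq_def using card_image[OF inj] by simp
  have "card (G - Sq) = 2" using card_Diff_subset[OF _ SqG] cSq cG fin finite_subset[OF SqG fin] by simp
  then obtain g1 g2 where g12: "G - Sq = {g1, g2}" "g1 \<noteq> g2" by (meson card_2_iff)
  have ed: "\<exists>p q. p \<noteq> q \<and> p < n \<and> q < n \<and> g = edm p q" if "g \<in> {g1, g2}" for g
  proof -
    have g: "g \<in> G" "g \<notin> Sq" using that g12(1) by blast+
    have "\<forall>j<n. g \<noteq> sqm j" using g(2) unfolding Sq_def by blast
    then show ?thesis using nonsq_edge deg g(1) by blast
  qed
  obtain p1 q1 where e1: "p1 \<noteq> q1" "p1 < n" "q1 < n" "g1 = edm p1 q1" using ed[of g1] by blast
  obtain p2 q2 where e2: "p2 \<noteq> q2" "p2 < n" "q2 < n" "g2 = edm p2 q2" using ed[of g2] by blast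
  have GG: "G = Sq \<union> {g1, g2}" using g12(1) SqG by blast
  have ideal: "in_mon_ideal G a \<longleftrightarrow> (\<exists>j<n. 2 \<le> a j) \<or> (1 \<le> a p1 \<and> 1 \<le> a q1) \<or> (1 \<le> a p2 \<and> 1 \<le> a q2)" for a
    unfolding in_mon_ideal_def GG Sq_def using dvd_sq dvd_ed e1(4) e2(4) by auto
  have std: "(a \<in> std n G d) = (is_mon n a \<and> mon_deg n a = d \<and> (\<forall>j. a j \<le> 1) \<and> \<not>(1 \<le> a p1 \<and> 1 \<le> a q1) \<and> \<not>(1 \<le> a p2 \<and> 1 \<le> a q2))" for a d
  proof -
    have "(is_mon n a \<and> \<not>(\<exists>j<n. 2 \<le> a j)) \<longleftrightarrow> (is_mon n a \<and> (\<forall>j. a j \<le> 1))"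
      unfolding is_mon_def by (metis Suc_1 not_less_eq_eq not_le le_zero_eq zero_le_one)
    then show ?thesis unfolding std_def ideal by auto
  qed
  have ne: "{p1,q1} \<noteq> {p2,q2}"
  proof
    assume "{p1,q1} = {p2,q2}"
    then have "edm p1 q1 = edm p2 q2" unfolding edm_def by (metis insert_iff singletonD)
    then show False using g12(2) e1(4) e2(4) by simp
  qed
  show ?thesis using e1 e2 ne std by blast
qed


lemma caseA:
  assumes H: "\<And>a d. (a \<in> std n G d) = (is_mon n a \<and> mon_deg n a = d \<and> (\<forall>j. a j \<le> 1) \<and> \<not>(1 \<le> a u1 \<and> 1 \<le> a v1) \<and> \<not>(1 \<le> a u2 \<and> 1 \<le> a v2))"
    and dist: "distinct [u1, v1, u2, v2]" and lt: "u1 < n" "v1 < n" "u2 < n" "v2 < n" and od: "odd n"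
  shows "has_WLP TYPE('k::field_char_0) n G"
proof -
  interpret W: wsetup n G "{v1, v2}" by (rule setupE[OF H]) (use dist in auto)
  show ?thesis by (rule W.wlp_from_bounds[OF W.boundA[OF refl H dist lt] od])
qed

lemma caseB:
  assumes H: "\<And>a d. (a \<in> std n G d) = (is_mon n a \<and> mon_deg n a = d \<and> (\<forall>j. a j \<le> 1) \<and> \<not>(1 \<le> a x \<and> 1 \<le> a y) \<and> \<not>(1 \<le> a y \<and> 1 \<le> a z))"
    and dist: "distinct [x, y, z]" and lt: "x < n" "y < n" "z < n" and od: "odd n"
  shows "has_WLP TYPE('k::field_char_0) n G"
proof -
  interpret W: wsetup n G "{y}" by (rule setupE[OF H]) (use dist in auto)
  show ?thesis by (rule W.wlp_from_bounds[OF W.boundB[OF refl H dist lt] od])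
qed

theorem proposition6p5:
  fixes n :: nat and G :: "monomial set"
  assumes "odd n" and "n \<ge> 5"
    and "finite G" and "card G = n + 2"
    and "\<forall>g\<in>G. is_mon n g \<and> mon_deg n g = 2"
    and "artinian_mon n G"
  shows "has_WLP TYPE('k::field_char_0) n G"
proof -
  obtain p1 q1 p2 q2 where P: "p1 \<noteq> q1" "p2 \<noteq> q2" "p1 < n" "q1 < n" "p2 < n" "q2 < n" "{p1,q1} \<noteq> {p2,q2}"
    and H: "\<forall>a d. (a \<in> std n G d) = (is_mon n a \<and> mon_deg n a = d \<and> (\<forall>j. a j \<le> 1) \<and> \<not>(1 \<le> a p1 \<and> 1 \<le> a q1) \<and> \<not>(1 \<le> a p2 \<and> 1 \<le> a q2))"
    using G_struct[OF assms(3,4,5,6)] by blast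
  show ?thesis
  proof (cases "p1 \<noteq> p2 \<and> p1 \<noteq> q2 \<and> q1 \<noteq> p2 \<and> q1 \<noteq> q2")
    case True
    show ?thesis by (rule caseA[of n G p1 q1 p2 q2]) (use H P True assms(1) in auto)
  next
    case False
    then consider "p1 = p2" | "p1 = q2" | "q1 = p2" | "q1 = q2" by blast
    then show ?thesis
    proof cases
      case 1
      then have "q1 \<noteq> q2" using P(7) by auto
      have H': "\<And>a d. (a \<in> std n G d) = (is_mon n a \<and> mon_deg n a = d \<and> (\<forall>j. a j \<le> 1) \<and> \<not>(1 \<le> a q1 \<and> 1 \<le> a p1) \<and> \<not>(1 \<le> a p1 \<and> 1 \<le> a q2))"
        using H 1 by blast
      show ?thesis by (rule caseB[OF H']) (use P 1 \<open>q1 \<noteq> q2\<close> assms(1) in auto)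
    next
      case 2
      then have "q1 \<noteq> p2" using P(7) by auto
      have H': "\<And>a d. (a \<in> std n G d) = (is_mon n a \<and> mon_deg n a = d \<and> (\<forall>j. a j \<le> 1) \<and> \<not>(1 \<le> a q1 \<and> 1 \<le> a p1) \<and> \<not>(1 \<le> a p1 \<and> 1 \<le> a p2))"
        using H 2 by blast
      show ?thesis by (rule caseB[OF H']) (use P 2 \<open>q1 \<noteq> p2\<close> assms(1) in auto)
    next
      case 3
      then have "p1 \<noteq> q2" using P(7) by auto
      have H': "\<And>a d. (a \<in> std n G d) = (is_mon n a \<and> mon_deg n a = d \<and> (\<forall>j. a j \<le> 1) \<and> \<not>(1 \<le> a p1 \<and> 1 \<le> a q1) \<and> \<not>(1 \<le> a q1 \<and> 1 \<le> a q2))"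
        using H 3 by blast
      show ?thesis by (rule caseB[OF H']) (use P 3 \<open>p1 \<noteq> q2\<close> assms(1) in auto)
    next
      case 4
      then have "p1 \<noteq> p2" using P(7) by auto
      have H': "\<And>a d. (a \<in> std n G d) = (is_mon n a \<and> mon_deg n a = d \<and> (\<forall>j. a j \<le> 1) \<and> \<not>(1 \<le> a p1 \<and> 1 \<le> a q1) \<and> \<not>(1 \<le> a q1 \<and> 1 \<le> a p2))"
        using H 4 by blast
      show ?thesis by (rule caseB[OF H']) (use P 4 \<open>p1 \<noteq> p2\<close> assms(1) in auto)
    qed
  qed
qed


end
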